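(* Let $K$ and $K_1,\dots,K_N$ be knots in $S^3$ with groups $\pi=\pi_1(S^3\setminus K)$, $\pi_i=\pi_1(S^3\setminus K_i)$ and standard meridian–longitude pairs $(m,l)$, $(m_i,l_i)$. Suppose each $K_i$ satisfies the Brumfiel–Hilden condition and that for each $i$ there is a surjective group homomorphism $f_i:\pi_i\to\pi$ with $f_i(m_i)=m$ and $f_i(l_i)=l^{d_i}$ for some $d_i\in\mathbb{Z}$. If the integers $d_1,\dots,d_N$ generate $\mathbb{Z}$ as a group, then $K$ satisfies the Brumfiel–Hilden condition.
   Context: For a group $\pi$, the Brumfiel–Hilden algebra is $H[\pi]:=\mathbb{C}[\pi]/I$, where $I$ is the two-sided ideal of the group algebra generated by all elements $g(h+h^{-1})-(h+h^{-1})g$ with $g,h\in\pi$. $H^+[\pi]\subset H[\pi]$ is the subalgebra generated by the images of all $g+g^{-1}$, $g\in\pi$. For an element $X\in H[\pi]$ which is the image of a group element, $H^+[\pi][X^{\pm1}]$ denotes the subalgebra of $H[\pi]$ generated by $H^+[\pi]$, $X$ and $X^{-1}$. A knot $K\subset S^3$ with group $\pi=\pi_1(S^3\setminus K)$ and standard (commuting) meridian $m$ and longitude $l$ is said to satisfy the Brumfiel–Hilden condition if the image $Y$ of $l$ in $H[\pi]$ lies in $H^+[\pi][X^{\pm1}]$, where $X$ is the image of $m$. *)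

theory Defs
  imports Complex_Main "HOL-Algebra.Group"
begin

definition galg :: "('g,'c) monoid_scheme \<Rightarrow> ('g \<Rightarrow> complex) set" where
  "galg G = {a. finite {x. a x \<noteq> 0} \<and> {x. a x \<noteq> 0} \<subseteq> carrier G}"

definition delta :: "'g \<Rightarrow> 'g \<Rightarrow> complex" where
  "delta g = (\<lambda>x. if x = g then 1 else 0)"

definition fadd :: "('g \<Rightarrow> complex) \<Rightarrow> ('g \<Rightarrow> complex) \<Rightarrow> 'g \<Rightarrow> complex" where
  "fadd a b = (\<lambda>x. a x + b x)"

definition fdiff :: "('g \<Rightarrow> complex) \<Rightarrow> ('g \<Rightarrow> complex) \<Rightarrow> 'g \<Rightarrow> complex" where
  "fdiff a b = (\<lambda>x. a x - b x)"

definition conv :: "('g,'c) monoid_scheme \<Rightarrow> ('g \<Rightarrow> complex) \<Rightarrow> ('g \<Rightarrow> complex) \<Rightarrow> 'g \<Rightarrow> complex" where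
  "conv G a b = (\<lambda>x. if x \<in> carrier G
       then (\<Sum>y\<in>{y. a y \<noteq> 0}. a y * b (inv\<^bsub>G\<^esub> y \<otimes>\<^bsub>G\<^esub> x)) else 0)"

inductive_set bh_ideal :: "('g,'c) monoid_scheme \<Rightarrow> ('g \<Rightarrow> complex) set"
  for G :: "('g,'c) monoid_scheme" where
  gen: "g \<in> carrier G \<Longrightarrow> h \<in> carrier G \<Longrightarrow>
     fdiff (conv G (delta g) (fadd (delta h) (delta (inv\<^bsub>G\<^esub> h))))
       (conv G (fadd (delta h) (delta (inv\<^bsub>G\<^esub> h))) (delta g)) \<in> bh_ideal G"
| zero: "(\<lambda>_. 0) \<in> bh_ideal G"
| add: "a \<in> bh_ideal G \<Longrightarrow> b \<in> bh_ideal G \<Longrightarrow> fadd a b \<in> bh_ideal G"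
| smult: "a \<in> bh_ideal G \<Longrightarrow> (\<lambda>x. c * a x) \<in> bh_ideal G"
| lmult: "a \<in> bh_ideal G \<Longrightarrow> r \<in> galg G \<Longrightarrow> conv G r a \<in> bh_ideal G"
| rmult: "a \<in> bh_ideal G \<Longrightarrow> r \<in> galg G \<Longrightarrow> conv G a r \<in> bh_ideal G"

text \<open>Preimage in C[G] of the subalgebra H^+[G][X^{+-1}] of H[G] = C[G]/I, X the image of m:
  the subalgebra of C[G] generated by I, all g + g^-1, m and m^-1.\<close>
inductive_set bh_plus_X :: "('g,'c) monoid_scheme \<Rightarrow> 'g \<Rightarrow> ('g \<Rightarrow> complex) set"
  for G :: "('g,'c) monoid_scheme" and m :: 'g where
  ideal: "a \<in> bh_ideal G \<Longrightarrow> a \<in> bh_plus_X G m"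
| sym: "g \<in> carrier G \<Longrightarrow> fadd (delta g) (delta (inv\<^bsub>G\<^esub> g)) \<in> bh_plus_X G m"
| X: "delta m \<in> bh_plus_X G m"
| Xinv: "delta (inv\<^bsub>G\<^esub> m) \<in> bh_plus_X G m"
| one: "delta \<one>\<^bsub>G\<^esub> \<in> bh_plus_X G m"
| add: "a \<in> bh_plus_X G m \<Longrightarrow> b \<in> bh_plus_X G m \<Longrightarrow> fadd a b \<in> bh_plus_X G m"
| smult: "a \<in> bh_plus_X G m \<Longrightarrow> (\<lambda>x. c * a x) \<in> bh_plus_X G m"
| mult: "a \<in> bh_plus_X G m \<Longrightarrow> b \<in> bh_plus_X G m \<Longrightarrow> conv G a b \<in> bh_plus_X G m"

text \<open>Brumfiel--Hilden condition: the image Y of l in H[G] lies in H^+[G][X^{+-1}].\<close>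
definition BH_condition :: "('g,'c) monoid_scheme \<Rightarrow> 'g \<Rightarrow> 'g \<Rightarrow> bool" where
  "BH_condition G m l \<longleftrightarrow> delta l \<in> bh_plus_X G m"

text \<open>Abstract stand-in for (knot group, meridian, longitude): a group with commuting m, l.\<close>
definition peripheral_pair :: "('g,'c) monoid_scheme \<Rightarrow> 'g \<Rightarrow> 'g \<Rightarrow> bool" where
  "peripheral_pair G m l \<longleftrightarrow> group G \<and> m \<in> carrier G \<and> l \<in> carrier G
      \<and> m \<otimes>\<^bsub>G\<^esub> l = l \<otimes>\<^bsub>G\<^esub> m"

end

theory Submission
  imports Defs
begin

lemma conv_expand:
  assumes G: "group G" and fa: "finite A" and fb: "finite B"
    and sa: "{x. a x \<noteq> 0} \<subseteq> A" and sb: "{x. b x \<noteq> 0} \<subseteq> B"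
    and A: "A \<subseteq> carrier G" and B: "B \<subseteq> carrier G"
  shows "conv G a b x = (\<Sum>y\<in>A. \<Sum>z\<in>B. a y * b z * (if y \<otimes>\<^bsub>G\<^esub> z = x then 1 else 0))"
proof (cases "x \<in> carrier G")
  case True
  interpret group G by fact
  have inner: "(\<Sum>z\<in>B. a y * b z * (if y \<otimes>\<^bsub>G\<^esub> z = x then 1 else 0)) = a y * b (inv\<^bsub>G\<^esub> y \<otimes>\<^bsub>G\<^esub> x)"
    if y: "y \<in> carrier G" for y
  proof -
    have eq: "(y \<otimes>\<^bsub>G\<^esub> z = x) = (inv\<^bsub>G\<^esub> y \<otimes>\<^bsub>G\<^esub> x = z)" if "z \<in> carrier G" for z
      using that y True by (metis inv_solve_left)
    have "(\<Sum>z\<in>B. a y * b z * (if y \<otimes>\<^bsub>G\<^esub> z = x then 1 else 0)) = (\<Sum>z\<in>B. if inv\<^bsub>G\<^esub> y \<otimes>\<^bsub>G\<^esub> x = z then a y * b z else 0)"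
      by (rule sum.cong) (use eq B in auto)
    also have "\<dots> = (if inv\<^bsub>G\<^esub> y \<otimes>\<^bsub>G\<^esub> x \<in> B then a y * b (inv\<^bsub>G\<^esub> y \<otimes>\<^bsub>G\<^esub> x) else 0)" using fb by simp
    also have "\<dots> = a y * b (inv\<^bsub>G\<^esub> y \<otimes>\<^bsub>G\<^esub> x)" using sb by auto
    finally show ?thesis .
  qed
  have "conv G a b x = (\<Sum>y\<in>{x. a x \<noteq> 0}. a y * b (inv\<^bsub>G\<^esub> y \<otimes>\<^bsub>G\<^esub> x))" using True by (simp add: conv_def)
  also have "\<dots> = (\<Sum>y\<in>A. a y * b (inv\<^bsub>G\<^esub> y \<otimes>\<^bsub>G\<^esub> x))"
    by (rule sum.mono_neutral_left) (use fa sa in auto)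
  also have "\<dots> = (\<Sum>y\<in>A. \<Sum>z\<in>B. a y * b z * (if y \<otimes>\<^bsub>G\<^esub> z = x then 1 else 0))"
    by (rule sum.cong) (use inner A in auto)
  finally show ?thesis .
next
  case False
  interpret group G by fact
  have "\<And>y z. y \<in> A \<Longrightarrow> z \<in> B \<Longrightarrow> y \<otimes>\<^bsub>G\<^esub> z \<noteq> x" using A B False by (meson m_closed subsetD)
  then show ?thesis using False by (simp add: conv_def)
qed

definition push :: "('h \<Rightarrow> 'g) \<Rightarrow> ('h \<Rightarrow> complex) \<Rightarrow> 'g \<Rightarrow> complex" where
  "push f a = (\<lambda>y. \<Sum>x\<in>{x. a x \<noteq> 0 \<and> f x = y}. a x)"

lemma push_eq:
  assumes "finite C" "{x. a x \<noteq> 0} \<subseteq> C"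
  shows "push f a y = (\<Sum>x\<in>{x\<in>C. f x = y}. a x)"
  unfolding push_def by (rule sum.mono_neutral_left) (use assms in auto)

lemma push_supp: "{y. push f a y \<noteq> 0} \<subseteq> f ` {x. a x \<noteq> 0}"
proof
  fix y assume "y \<in> {y. push f a y \<noteq> 0}"
  then have "{x. a x \<noteq> 0 \<and> f x = y} \<noteq> {}"
  proof (intro notI)
    assume "{x. a x \<noteq> 0 \<and> f x = y} = {}"
    then have "push f a y = 0" unfolding push_def by (metis sum.empty)
    with \<open>y \<in> {y. push f a y \<noteq> 0}\<close> show False by simp
  qed
  then show "y \<in> f ` {x. a x \<noteq> 0}" by auto
qed

lemma galg_sub:
  assumes "{x. c x \<noteq> 0} \<subseteq> S" "finite S" "S \<subseteq> carrier G"
  shows "c \<in> galg G"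
proof -
  have "finite {x. c x \<noteq> 0}" by (rule finite_subset[OF assms(1,2)])
  moreover have "{x. c x \<noteq> 0} \<subseteq> carrier G" using assms(1,3) by (rule subset_trans)
  ultimately show ?thesis by (simp add: galg_def)
qed

lemma push_galg:
  assumes "a \<in> galg H" "f ` carrier H \<subseteq> carrier G"
  shows "push f a \<in> galg G"
proof (rule galg_sub)
  show "{y. push f a y \<noteq> 0} \<subseteq> f ` {x. a x \<noteq> 0}" by (rule push_supp)
  show "finite (f ` {x. a x \<noteq> 0})" using assms by (simp add: galg_def)
  show "f ` {x. a x \<noteq> 0} \<subseteq> carrier G" using assms by (auto simp: galg_def)
qed

lemma push_delta: "push f (delta g) = delta (f g)"
proof
  fix y
  have "{x. delta g x \<noteq> 0 \<and> f x = y} = (if f g = y then {g} else {})" by (auto simp: delta_def)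
  then show "push f (delta g) y = delta (f g) y" by (simp add: push_def delta_def)
qed

lemma push_fadd:
  assumes "finite {x. a x \<noteq> 0}" "finite {x. b x \<noteq> 0}"
  shows "push f (fadd a b) = fadd (push f a) (push f b)"
proof
  fix y
  let ?C = "{x. a x \<noteq> 0} \<union> {x. b x \<noteq> 0}"
  have s: "{x. fadd a b x \<noteq> 0} \<subseteq> ?C" by (auto simp: fadd_def)
  show "push f (fadd a b) y = fadd (push f a) (push f b) y"
    using assms s
    by (simp add: push_eq[of ?C] fadd_def sum.distrib)
qed

lemma push_fdiff:
  assumes "finite {x. a x \<noteq> 0}" "finite {x. b x \<noteq> 0}"
  shows "push f (fdiff a b) = fdiff (push f a) (push f b)"
proof
  fix y
  let ?C = "{x. a x \<noteq> 0} \<union> {x. b x \<noteq> 0}"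
  have s: "{x. fdiff a b x \<noteq> 0} \<subseteq> ?C" by (auto simp: fdiff_def)
  show "push f (fdiff a b) y = fdiff (push f a) (push f b) y"
    using assms s
    by (simp add: push_eq[of ?C] fdiff_def sum_subtractf)
qed

lemma push_smult:
  assumes "finite {x. a x \<noteq> 0}"
  shows "push f (\<lambda>x. c * a x) = (\<lambda>y. c * push f a y)"
proof
  fix y
  let ?C = "{x. a x \<noteq> 0}"
  have s: "{x. c * a x \<noteq> 0} \<subseteq> ?C" by auto
  show "push f (\<lambda>x. c * a x) y = c * push f a y"
    using assms s by (simp add: push_eq[of ?C] sum_distrib_left)
qed

lemma push_zero: "push f (\<lambda>_. 0) = (\<lambda>_. 0)"
  by (simp add: push_def)

lemma conv_supp:
  assumes G: "group G" and a: "a \<in> galg G" and b: "b \<in> galg G"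
  shows "{w. conv G a b w \<noteq> 0} \<subseteq> (\<lambda>(y,z). y \<otimes>\<^bsub>G\<^esub> z) ` ({x. a x \<noteq> 0} \<times> {x. b x \<noteq> 0})"
proof
  fix w assume w: "w \<in> {w. conv G a b w \<noteq> 0}"
  have "conv G a b w = (\<Sum>y\<in>{x. a x \<noteq> 0}. \<Sum>z\<in>{x. b x \<noteq> 0}. a y * b z * (if y \<otimes>\<^bsub>G\<^esub> z = w then 1 else 0))"
    by (rule conv_expand) (use G a b in \<open>auto simp: galg_def\<close>)
  moreover have "\<exists>y\<in>{x. a x \<noteq> 0}. \<exists>z\<in>{x. b x \<noteq> 0}. y \<otimes>\<^bsub>G\<^esub> z = w"
  proof (rule ccontr)
    assume n: "\<not> ?thesis"
    have "(\<Sum>y\<in>{x. a x \<noteq> 0}. \<Sum>z\<in>{x. b x \<noteq> 0}. a y * b z * (if y \<otimes>\<^bsub>G\<^esub> z = w then 1 else 0)) = 0"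
      by (rule sum.neutral, rule ballI, rule sum.neutral) (use n in auto)
    with w \<open>conv G a b w = _\<close> show False by simp
  qed
  ultimately obtain y z where "a y \<noteq> 0" "b z \<noteq> 0" "y \<otimes>\<^bsub>G\<^esub> z = w" by blast
  then show "w \<in> (\<lambda>(y,z). y \<otimes>\<^bsub>G\<^esub> z) ` ({x. a x \<noteq> 0} \<times> {x. b x \<noteq> 0})" by force
qed

lemma galg_conv:
  assumes G: "group G" and a: "a \<in> galg G" and b: "b \<in> galg G"
  shows "conv G a b \<in> galg G"
proof -
  let ?S = "(\<lambda>(y,z). y \<otimes>\<^bsub>G\<^esub> z) ` ({x. a x \<noteq> 0} \<times> {x. b x \<noteq> 0})"
  have "finite ?S" using a b by (simp add: galg_def)
  then have "finite {w. conv G a b w \<noteq> 0}" using conv_supp[OF assms] by (rule finite_subset[rotated])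
  moreover have "{w. conv G a b w \<noteq> 0} \<subseteq> carrier G" by (auto simp: conv_def split: if_splits)
  ultimately show ?thesis by (simp add: galg_def)
qed

lemma galg_delta: "g \<in> carrier G \<Longrightarrow> delta g \<in> galg G"
  by (auto simp: galg_def delta_def)

lemma galg_fadd: assumes "a \<in> galg G" "b \<in> galg G" shows "fadd a b \<in> galg G"
  by (rule galg_sub[of _ "{x. a x \<noteq> 0} \<union> {x. b x \<noteq> 0}"]) (use assms in \<open>auto simp: fadd_def galg_def\<close>)

lemma galg_fdiff: assumes "a \<in> galg G" "b \<in> galg G" shows "fdiff a b \<in> galg G"
  by (rule galg_sub[of _ "{x. a x \<noteq> 0} \<union> {x. b x \<noteq> 0}"]) (use assms in \<open>auto simp: fdiff_def galg_def\<close>)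

lemma galg_smult: assumes "a \<in> galg G" shows "(\<lambda>x. c * a x) \<in> galg G"
  by (rule galg_sub[of _ "{x. a x \<noteq> 0}"]) (use assms in \<open>auto simp: galg_def\<close>)

lemma galg_zero: "(\<lambda>_. 0) \<in> galg G" by (simp add: galg_def)


lemma sum_fiber:
  assumes "finite S"
  shows "(\<Sum>u\<in>f`S. (\<Sum>y\<in>{y\<in>S. f y = u}. a y) * R u) = (\<Sum>y\<in>S. (a y :: complex) * R (f y))"
proof -
  have "(\<Sum>y\<in>S. a y * R (f y)) = (\<Sum>u\<in>f`S. \<Sum>y\<in>{y\<in>S. f y = u}. a y * R (f y))"
    by (rule sum.image_gen[OF assms])
  also have "\<dots> = (\<Sum>u\<in>f`S. (\<Sum>y\<in>{y\<in>S. f y = u}. a y) * R u)"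
    by (rule sum.cong) (auto simp: sum_distrib_right)
  finally show ?thesis by simp
qed

lemma swap3:
  "(\<Sum>w\<in>W. \<Sum>y\<in>A. \<Sum>z\<in>B. g y z w) = (\<Sum>y\<in>A. \<Sum>z\<in>B. \<Sum>w\<in>W. (g y z w :: complex))"
proof -
  have "(\<Sum>w\<in>W. \<Sum>y\<in>A. \<Sum>z\<in>B. g y z w) = (\<Sum>y\<in>A. \<Sum>w\<in>W. \<Sum>z\<in>B. g y z w)" by (rule sum.swap)
  also have "\<dots> = (\<Sum>y\<in>A. \<Sum>z\<in>B. \<Sum>w\<in>W. g y z w)" by (rule sum.cong[OF refl], rule sum.swap)
  finally show ?thesis .
qed

lemma sum_ind:
  assumes "finite W"
  shows "(\<Sum>w\<in>W. c * (if p = w then 1 else 0)) = (if p \<in> W then c else (0::complex))"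
proof -
  have "(\<Sum>w\<in>W. c * (if p = w then 1 else 0)) = (\<Sum>w\<in>W. if p = w then c else 0)"
    by (rule sum.cong) auto
  then show ?thesis using assms by simp
qed

lemma push_conv:
  assumes H: "group H" and G: "group G" and f: "f \<in> hom H G"
    and a: "a \<in> galg H" and b: "b \<in> galg H"
  shows "push f (conv H a b) = conv G (push f a) (push f b)"
proof
  fix x
  define Sa where "Sa = {x. a x \<noteq> 0}"
  define Sb where "Sb = {x. b x \<noteq> 0}"
  have fin: "finite Sa" "finite Sb" and sub: "Sa \<subseteq> carrier H" "Sb \<subseteq> carrier H"
    using a b by (auto simp: galg_def Sa_def Sb_def)
  have fcar: "f ` carrier H \<subseteq> carrier G" using f by (auto simp: hom_def)
  define C where "C = (\<lambda>(y,z). y \<otimes>\<^bsub>H\<^esub> z) ` (Sa \<times> Sb)"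
  have finC: "finite C" using fin by (simp add: C_def)
  have suppC: "{w. conv H a b w \<noteq> 0} \<subseteq> C" unfolding C_def Sa_def Sb_def by (rule conv_supp[OF H a b])
  have exp: "conv H a b w = (\<Sum>y\<in>Sa. \<Sum>z\<in>Sb. a y * b z * (if y \<otimes>\<^bsub>H\<^esub> z = w then 1 else 0))" for w
    by (rule conv_expand[OF H]) (use fin sub in \<open>auto simp: Sa_def Sb_def\<close>)
  let ?W = "{w\<in>C. f w = x}"
  have finW: "finite ?W" using finC by simp
  have "push f (conv H a b) x = (\<Sum>w\<in>?W. conv H a b w)" by (rule push_eq[OF finC suppC])
  also have "\<dots> = (\<Sum>w\<in>?W. \<Sum>y\<in>Sa. \<Sum>z\<in>Sb. a y * b z * (if y \<otimes>\<^bsub>H\<^esub> z = w then 1 else 0))"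
    by (simp add: exp)
  also have "\<dots> = (\<Sum>y\<in>Sa. \<Sum>z\<in>Sb. \<Sum>w\<in>?W. a y * b z * (if y \<otimes>\<^bsub>H\<^esub> z = w then 1 else 0))"
    by (rule swap3)
  also have "\<dots> = (\<Sum>y\<in>Sa. \<Sum>z\<in>Sb. a y * b z * (if f (y \<otimes>\<^bsub>H\<^esub> z) = x then 1 else 0))"
  proof (intro sum.cong refl)
    fix y z assume y: "y \<in> Sa" and z: "z \<in> Sb"
    have "y \<otimes>\<^bsub>H\<^esub> z \<in> C" using y z by (force simp: C_def)
    then show "(\<Sum>w\<in>?W. a y * b z * (if y \<otimes>\<^bsub>H\<^esub> z = w then 1 else 0)) = a y * b z * (if f (y \<otimes>\<^bsub>H\<^esub> z) = x then 1 else 0)"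
      by (simp add: sum_ind[OF finW])
  qed
  finally have L: "push f (conv H a b) x = (\<Sum>y\<in>Sa. \<Sum>z\<in>Sb. a y * b z * (if f (y \<otimes>\<^bsub>H\<^esub> z) = x then 1 else 0))" .
  have pa: "push f a u = (\<Sum>y\<in>{y\<in>Sa. f y = u}. a y)" for u by (rule push_eq) (use fin in \<open>auto simp: Sa_def\<close>)
  have pb: "push f b u = (\<Sum>y\<in>{y\<in>Sb. f y = u}. b y)" for u by (rule push_eq) (use fin in \<open>auto simp: Sb_def\<close>)
  have "conv G (push f a) (push f b) x = (\<Sum>u\<in>f`Sa. \<Sum>v\<in>f`Sb. push f a u * push f b v * (if u \<otimes>\<^bsub>G\<^esub> v = x then 1 else 0))"
    by (rule conv_expand[OF G]) (use fin sub fcar push_supp[of f a] push_supp[of f b] in \<open>auto simp: Sa_def Sb_def\<close>)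
  also have "\<dots> = (\<Sum>u\<in>f`Sa. push f a u * (\<Sum>v\<in>f`Sb. push f b v * (if u \<otimes>\<^bsub>G\<^esub> v = x then 1 else 0)))"
    by (simp add: sum_distrib_left mult.assoc)
  also have "\<dots> = (\<Sum>u\<in>f`Sa. push f a u * (\<Sum>z\<in>Sb. b z * (if u \<otimes>\<^bsub>G\<^esub> f z = x then 1 else 0)))"
    by (simp only: pb sum_fiber[OF fin(2)])
  also have "\<dots> = (\<Sum>y\<in>Sa. a y * (\<Sum>z\<in>Sb. b z * (if f y \<otimes>\<^bsub>G\<^esub> f z = x then 1 else 0)))"
    by (simp only: pa sum_fiber[OF fin(1)])
  also have "\<dots> = (\<Sum>y\<in>Sa. \<Sum>z\<in>Sb. a y * b z * (if f (y \<otimes>\<^bsub>H\<^esub> z) = x then 1 else 0))"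
  proof (intro sum.cong refl)
    fix y assume y: "y \<in> Sa"
    have "(\<Sum>z\<in>Sb. b z * (if f y \<otimes>\<^bsub>G\<^esub> f z = x then 1 else 0)) = (\<Sum>z\<in>Sb. b z * (if f (y \<otimes>\<^bsub>H\<^esub> z) = x then 1 else 0))"
    proof (rule sum.cong[OF refl])
      fix z assume z: "z \<in> Sb"
      have "f (y \<otimes>\<^bsub>H\<^esub> z) = f y \<otimes>\<^bsub>G\<^esub> f z" using y z sub f by (intro hom_mult) auto
      then show "b z * (if f y \<otimes>\<^bsub>G\<^esub> f z = x then 1 else 0) = b z * (if f (y \<otimes>\<^bsub>H\<^esub> z) = x then 1 else 0)" by simp
    qed
    then show "a y * (\<Sum>z\<in>Sb. b z * (if f y \<otimes>\<^bsub>G\<^esub> f z = x then 1 else 0)) = (\<Sum>z\<in>Sb. a y * b z * (if f (y \<otimes>\<^bsub>H\<^esub> z) = x then 1 else 0))"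
      by (simp add: sum_distrib_left mult.assoc)
  qed
  finally show "push f (conv H a b) x = conv G (push f a) (push f b) x" using L by simp
qed


lemma ideal_galg:
  assumes G: "group G" shows "a \<in> bh_ideal G \<Longrightarrow> a \<in> galg G"
proof (induction rule: bh_ideal.induct)
  case (gen g h)
  then have "inv\<^bsub>G\<^esub> h \<in> carrier G" using G by (simp add: group.inv_closed)
  then show ?case using gen G
    by (intro galg_fdiff galg_conv galg_fadd galg_delta) auto
qed (auto intro: galg_fadd galg_smult galg_zero galg_conv G)

lemma plus_galg:
  assumes G: "group G" and m: "m \<in> carrier G" shows "a \<in> bh_plus_X G m \<Longrightarrow> a \<in> galg G"
proof (induction rule: bh_plus_X.induct)
  case (sym g)
  then have "inv\<^bsub>G\<^esub> g \<in> carrier G" using G by (simp add: group.inv_closed)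
  then show ?case using sym by (intro galg_fadd galg_delta) auto
next
  case Xinv
  then show ?case using G m by (intro galg_delta) (simp add: group.inv_closed)
next
  case one
  then show ?case using G by (intro galg_delta) (simp add: group.is_monoid monoid.one_closed)
qed (auto intro: galg_fadd galg_smult galg_conv G ideal_galg galg_delta m)

lemma fin_delta [simp]: "finite {x. delta g x \<noteq> 0}" by (simp add: delta_def)

lemma galg_fin: "a \<in> galg G \<Longrightarrow> finite {x. a x \<noteq> 0}" by (simp add: galg_def)

lemma ideal_push:
  assumes H: "group H" and G: "group G" and f: "f \<in> hom H G"
  shows "a \<in> bh_ideal H \<Longrightarrow> push f a \<in> bh_ideal G"
proof (induction rule: bh_ideal.induct)
  case (gen g h)
  have gh: "group_hom H G f" using H G f by (simp add: group_hom_def group_hom_axioms_def)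
  have hi: "inv\<^bsub>H\<^esub> h \<in> carrier H" using gen H by (simp add: group.inv_closed)
  have fi: "f (inv\<^bsub>H\<^esub> h) = inv\<^bsub>G\<^esub> (f h)" using gh gen by (simp add: group_hom.hom_inv)
  have fc: "f g \<in> carrier G" "f h \<in> carrier G" using f gen by (auto simp: hom_def)
  let ?D = "fadd (delta h) (delta (inv\<^bsub>H\<^esub> h))"
  have Dg: "?D \<in> galg H" using gen hi by (intro galg_fadd galg_delta) auto
  have dg: "delta g \<in> galg H" using gen by (intro galg_delta)
  have pD: "push f ?D = fadd (delta (f h)) (delta (inv\<^bsub>G\<^esub> (f h)))"
    using gen hi by (simp add: push_fadd galg_fin galg_delta push_delta fi)
  have "push f (fdiff (conv H (delta g) ?D) (conv H ?D (delta g)))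
      = fdiff (conv G (delta (f g)) (fadd (delta (f h)) (delta (inv\<^bsub>G\<^esub> (f h)))))
              (conv G (fadd (delta (f h)) (delta (inv\<^bsub>G\<^esub> (f h)))) (delta (f g)))"
  proof -
    have c1: "conv H (delta g) ?D \<in> galg H" by (rule galg_conv[OF H dg Dg])
    have c2: "conv H ?D (delta g) \<in> galg H" by (rule galg_conv[OF H Dg dg])
    show ?thesis
      by (simp only: push_fdiff[OF galg_fin[OF c1] galg_fin[OF c2]] push_conv[OF H G f dg Dg]
          push_conv[OF H G f Dg dg] pD push_delta)
  qed
  then show ?case using fc by (simp add: bh_ideal.gen)
next
  case zero
  then show ?case by (simp add: push_zero bh_ideal.zero)
next
  case (add a b)
  then have "a \<in> galg H" "b \<in> galg H" using ideal_galg[OF H] by auto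
  then show ?case using add by (simp add: push_fadd[OF galg_fin galg_fin] bh_ideal.add)
next
  case (smult a c)
  then have "a \<in> galg H" using ideal_galg[OF H] by auto
  then show ?case using smult by (simp add: push_smult[OF galg_fin] bh_ideal.smult)
next
  case (lmult a r)
  have fc: "f ` carrier H \<subseteq> carrier G" using f by (auto simp: hom_def)
  have ag: "a \<in> galg H" using lmult ideal_galg[OF H] by auto
  show ?case unfolding push_conv[OF H G f \<open>r \<in> galg H\<close> ag]
    by (rule bh_ideal.lmult[OF lmult.IH push_galg[OF \<open>r \<in> galg H\<close> fc]])
next
  case (rmult a r)
  have fc: "f ` carrier H \<subseteq> carrier G" using f by (auto simp: hom_def)
  have ag: "a \<in> galg H" using rmult ideal_galg[OF H] by auto
  show ?case unfolding push_conv[OF H G f ag \<open>r \<in> galg H\<close>]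
    by (rule bh_ideal.rmult[OF rmult.IH push_galg[OF \<open>r \<in> galg H\<close> fc]])
qed

lemma plus_push:
  assumes H: "group H" and G: "group G" and f: "f \<in> hom H G" and m: "m \<in> carrier H"
  shows "a \<in> bh_plus_X H m \<Longrightarrow> push f a \<in> bh_plus_X G (f m)"
proof (induction rule: bh_plus_X.induct)
  case (ideal a)
  then show ?case using ideal_push[OF H G f] by (simp add: bh_plus_X.ideal)
next
  case (sym g)
  have gh: "group_hom H G f" using H G f by (simp add: group_hom_def group_hom_axioms_def)
  have hi: "inv\<^bsub>H\<^esub> g \<in> carrier H" using sym H by (simp add: group.inv_closed)
  have fi: "f (inv\<^bsub>H\<^esub> g) = inv\<^bsub>G\<^esub> (f g)" using gh sym by (simp add: group_hom.hom_inv)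
  have fc: "f g \<in> carrier G" using f sym by (auto simp: hom_def)
  have "push f (fadd (delta g) (delta (inv\<^bsub>H\<^esub> g))) = fadd (delta (f g)) (delta (inv\<^bsub>G\<^esub> (f g)))"
    using sym hi by (simp add: push_fadd galg_fin galg_delta push_delta fi)
  then show ?case using fc by (simp add: bh_plus_X.sym)
next
  case X
  then show ?case by (simp add: push_delta bh_plus_X.X)
next
  case Xinv
  have gh: "group_hom H G f" using H G f by (simp add: group_hom_def group_hom_axioms_def)
  have fi: "f (inv\<^bsub>H\<^esub> m) = inv\<^bsub>G\<^esub> (f m)" using gh m by (simp add: group_hom.hom_inv)
  then show ?case by (simp add: push_delta bh_plus_X.Xinv)
next
  case one
  have "f \<one>\<^bsub>H\<^esub> = \<one>\<^bsub>G\<^esub>" using H G f by (simp add: hom_one)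
  then show ?case by (simp add: push_delta bh_plus_X.one)
next
  case (add a b)
  then have "a \<in> galg H" "b \<in> galg H" using plus_galg[OF H m] by auto
  then show ?case using add by (simp add: push_fadd[OF galg_fin galg_fin] bh_plus_X.add)
next
  case (smult a c)
  then have "a \<in> galg H" using plus_galg[OF H m] by auto
  then show ?case using smult by (simp add: push_smult[OF galg_fin] bh_plus_X.smult)
next
  case (mult a b)
  then show ?case using plus_galg[OF H m] H G f
    by (simp add: push_conv bh_plus_X.mult)
qed

lemma conv_delta:
  assumes G: "group G" and a: "a \<in> carrier G" and b: "b \<in> carrier G"
  shows "conv G (delta a) (delta b) = delta (a \<otimes>\<^bsub>G\<^esub> b)"
proof
  fix x
  have "conv G (delta a) (delta b) x = (\<Sum>y\<in>{a}. \<Sum>z\<in>{b}. delta a y * delta b z * (if y \<otimes>\<^bsub>G\<^esub> z = x then 1 else 0))"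
    by (rule conv_expand[OF G]) (use a b in \<open>auto simp: delta_def\<close>)
  then show "conv G (delta a) (delta b) x = delta (a \<otimes>\<^bsub>G\<^esub> b) x" by (simp add: delta_def)
qed

lemma plus_mult_delta:
  assumes G: "group G" and a: "a \<in> carrier G" and b: "b \<in> carrier G"
    and "delta a \<in> bh_plus_X G m" "delta b \<in> bh_plus_X G m"
  shows "delta (a \<otimes>\<^bsub>G\<^esub> b) \<in> bh_plus_X G m"
  using bh_plus_X.mult[OF assms(4,5)] conv_delta[OF G a b] by simp

lemma plus_inv_delta:
  assumes G: "group G" and a: "a \<in> carrier G" and "delta a \<in> bh_plus_X G m"
  shows "delta (inv\<^bsub>G\<^esub> a) \<in> bh_plus_X G m"
proof -
  have "delta (inv\<^bsub>G\<^esub> a) = fadd (fadd (delta a) (delta (inv\<^bsub>G\<^esub> a))) (\<lambda>x. (-1) * delta a x)"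
    by (simp add: fadd_def)
  moreover have "fadd (fadd (delta a) (delta (inv\<^bsub>G\<^esub> a))) (\<lambda>x. (-1) * delta a x) \<in> bh_plus_X G m"
    using assms by (intro bh_plus_X.add bh_plus_X.sym bh_plus_X.smult)
  ultimately show ?thesis by simp
qed

lemma pow_nat:
  assumes G: "group G" and l: "l \<in> carrier G" and k: "delta (l [^]\<^bsub>G\<^esub> (k::int)) \<in> bh_plus_X G m"
  shows "delta (l [^]\<^bsub>G\<^esub> (int n * k)) \<in> bh_plus_X G m"
proof (induction n)
  case 0
  then show ?case using G by (simp add: bh_plus_X.one)
next
  case (Suc n)
  have e: "int (Suc n) * k = int n * k + k" by (simp add: distrib_right)
  have "l [^]\<^bsub>G\<^esub> (int (Suc n) * k) = l [^]\<^bsub>G\<^esub> (int n * k) \<otimes>\<^bsub>G\<^esub> l [^]\<^bsub>G\<^esub> k"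
    unfolding e using G l by (simp only: group.int_pow_mult)
  then show ?case using plus_mult_delta[OF G _ _ Suc k] G l by (simp add: group.int_pow_closed)
qed

lemma pow_int:
  assumes G: "group G" and l: "l \<in> carrier G" and k: "delta (l [^]\<^bsub>G\<^esub> (k::int)) \<in> bh_plus_X G m"
  shows "delta (l [^]\<^bsub>G\<^esub> (j * k)) \<in> bh_plus_X G m"
proof -
  obtain n where "j = int n \<or> j = - int n" by (metis int_cases2)
  then show ?thesis
  proof
    assume "j = int n" then show ?thesis using pow_nat[OF assms] by metis
  next
    assume j: "j = - int n"
    have "l [^]\<^bsub>G\<^esub> (j * k) = inv\<^bsub>G\<^esub> (l [^]\<^bsub>G\<^esub> (int n * k))"
      using G l j by (metis group.int_pow_neg minus_mult_left)
    then show ?thesis using plus_inv_delta[OF G _ pow_nat[OF assms]] G l by (simp add: group.int_pow_closed)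
  qed
qed

lemma pow_sum:
  assumes G: "group G" and l: "l \<in> carrier G"
  shows "finite I \<Longrightarrow> (\<forall>i\<in>I. delta (l [^]\<^bsub>G\<^esub> (x i::int)) \<in> bh_plus_X G m)
     \<Longrightarrow> delta (l [^]\<^bsub>G\<^esub> (\<Sum>i\<in>I. x i)) \<in> bh_plus_X G m"
proof (induction I rule: finite_induct)
  case empty
  then show ?case using G by (simp add: bh_plus_X.one)
next
  case (insert i I)
  have "l [^]\<^bsub>G\<^esub> (\<Sum>i\<in>insert i I. x i) = l [^]\<^bsub>G\<^esub> x i \<otimes>\<^bsub>G\<^esub> l [^]\<^bsub>G\<^esub> (\<Sum>i\<in>I. x i)"
    using insert G l by (simp add: group.int_pow_mult)
  then show ?case using insert plus_mult_delta[OF G] G l by (simp add: group.int_pow_closed)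
qed

theorem mainTheorem5:
  fixes G :: "('g,'c) monoid_scheme" and m l :: 'g
    and Gs :: "nat \<Rightarrow> ('h,'e) monoid_scheme" and ms ls :: "nat \<Rightarrow> 'h"
    and f :: "nat \<Rightarrow> 'h \<Rightarrow> 'g" and d :: "nat \<Rightarrow> int" and N :: nat
  assumes "peripheral_pair G m l"
    and "\<And>i. i \<in> {1..N} \<Longrightarrow> peripheral_pair (Gs i) (ms i) (ls i)"
    and "\<And>i. i \<in> {1..N} \<Longrightarrow> BH_condition (Gs i) (ms i) (ls i)"
    and "\<And>i. i \<in> {1..N} \<Longrightarrow> f i \<in> hom (Gs i) G"
    and "\<And>i. i \<in> {1..N} \<Longrightarrow> f i ` carrier (Gs i) = carrier G"
    and "\<And>i. i \<in> {1..N} \<Longrightarrow> f i (ms i) = m"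
    and "\<And>i. i \<in> {1..N} \<Longrightarrow> f i (ls i) = l [^]\<^bsub>G\<^esub> d i"
    and "\<forall>z::int. \<exists>c::nat \<Rightarrow> int. z = (\<Sum>i=1..N. c i * d i)"
  shows "BH_condition G m l"
proof -
  have G: "group G" and mc: "m \<in> carrier G" and lc: "l \<in> carrier G"
    using assms(1) by (auto simp: peripheral_pair_def)
  have di: "delta (l [^]\<^bsub>G\<^esub> d i) \<in> bh_plus_X G m" if i: "i \<in> {1..N}" for i
  proof -
    have Hi: "group (Gs i)" "ms i \<in> carrier (Gs i)" using assms(2)[OF i] by (auto simp: peripheral_pair_def)
    have "delta (ls i) \<in> bh_plus_X (Gs i) (ms i)" using assms(3)[OF i] by (simp add: BH_condition_def)
    from plus_push[OF Hi(1) G assms(4)[OF i] Hi(2) this]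
    show ?thesis by (simp add: push_delta assms(6)[OF i] assms(7)[OF i])
  qed
  obtain c where c: "(1::int) = (\<Sum>i=1..N. c i * d i)" using assms(8) by blast
  have "delta (l [^]\<^bsub>G\<^esub> (\<Sum>i=1..N. c i * d i)) \<in> bh_plus_X G m"
    by (rule pow_sum[OF G lc]) (auto intro: pow_int[OF G lc di])
  then have "delta (l [^]\<^bsub>G\<^esub> (1::int)) \<in> bh_plus_X G m" by (simp only: c[symmetric])
  then show ?thesis using G lc by (simp add: BH_condition_def group.int_pow_1)
qed

end
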